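(* Let $i\in\{1/2,1,2\}$, let $r,n$ be positive integers with $rn$ even, and let $m=rn/2$. Let $\rho$ be a uniformly random configuration in $\mathcal C(r)$ and let $\mu$ be the expectation of $\vartheta_i(\sigma(\rho))$. Then for every $t>0$, $$\Pr\big(|\vartheta_i(\sigma(\rho))-\mu|>t\big)\leq 2\exp(-t^2/(128m)).$$
   Context: Let $V=\{1,\dots,n\}$ and $W=V\times\{1,\dots,r\}$ (half-edges). A configuration is a partition of $W$ into $m=rn/2$ pairs; $\mathcal C(r)$ is the set of all configurations, equipped with the uniform distribution. Each configuration $\rho$ yields an $r$-regular multigraph $\pi(\rho)$ on $V$ by projecting each pair $\{(u,a),(v,b)\}$ to an edge $\{u,v\}$; $\sigma(\rho)$ is the simple graph obtained from $\pi(\rho)$ by deleting loops and replacing multiple edges by single edges. For a graph $G=(V,E)$ and real $k>1$, unit vectors $(v_1,\dots,v_n)$ in $\mathbb R^n$ form a vector $k$-coloring if $\langle v_i,v_j\rangle\leq-1/(k-1)$ for all edges; strict if equality holds on all edges; rigid if equality holds on all edges and $\langle v_i,v_j\rangle\geq-1/(k-1)$ for all non-adjacent $i\neq j$. $\bar\vartheta_{1/2}(G),\bar\vartheta_1(G),\bar\vartheta_2(G)$ are the infima of $k>1$ admitting a vector, strict vector, resp. rigid vector $k$-coloring, and $\vartheta_i(G)=\bar\vartheta_i(\bar G)$ with $\bar G$ the complement of $G$ ($\vartheta_1$ is the Lovász number). *)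

theory Defs
  imports Complex_Main "HOL-Library.Multiset"
begin

text \<open>Vertex set V = {1..n} and half-edges W = V x {1..r}.\<close>
definition Vset :: "nat \<Rightarrow> nat set" where
  "Vset n = {1..n}"

definition Wset :: "nat \<Rightarrow> nat \<Rightarrow> (nat \<times> nat) set" where
  "Wset n r = Vset n \<times> {1..r}"

definition configurations :: "nat \<Rightarrow> nat \<Rightarrow> (nat \<times> nat) set set set" where
  "configurations n r =
     {\<rho>. (\<forall>p\<in>\<rho>. p \<subseteq> Wset n r \<and> card p = 2) \<and> (\<forall>x\<in>Wset n r. \<exists>!p. p \<in> \<rho> \<and> x \<in> p)}"

text \<open>pi(rho): the multigraph, as a multiset of edges; an edge {u,v} is the set
  of its endpoints (a loop at u is the singleton {u}).\<close>
definition proj_multigraph :: "(nat \<times> nat) set set \<Rightarrow> nat set multiset" where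
  "proj_multigraph \<rho> = image_mset (\<lambda>p. fst ` p) (mset_set \<rho>)"

text \<open>sigma(rho): delete loops, identify multiple edges. Edge set of a simple graph on {1..n}.\<close>
definition simple_graph :: "(nat \<times> nat) set set \<Rightarrow> nat set set" where
  "simple_graph \<rho> = {e \<in> set_mset (proj_multigraph \<rho>). card e = 2}"

definition complement :: "nat \<Rightarrow> nat set set \<Rightarrow> nat set set" where
  "complement n E = {{a, b} | a b. a \<in> Vset n \<and> b \<in> Vset n \<and> a \<noteq> b \<and> {a, b} \<notin> E}"

text \<open>Vectors in R^n as functions nat => real, using coordinates 0..n-1.\<close>
definition inner_n :: "nat \<Rightarrow> (nat \<Rightarrow> real) \<Rightarrow> (nat \<Rightarrow> real) \<Rightarrow> real" where
  "inner_n n x y = (\<Sum>c<n. x c * y c)"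

datatype theta_index = Half | One | Two

text \<open>v :: nat => (nat => real) assigns to vertex a \<in> {1..n} the vector v a in R^n.
  Half: vector k-colouring; One: strict; Two: rigid.\<close>
definition vector_coloring ::
  "theta_index \<Rightarrow> nat \<Rightarrow> nat set set \<Rightarrow> real \<Rightarrow> (nat \<Rightarrow> nat \<Rightarrow> real) \<Rightarrow> bool" where
  "vector_coloring i n E k v \<longleftrightarrow>
     (\<forall>a\<in>Vset n. inner_n n (v a) (v a) = 1) \<and>
     (\<forall>a\<in>Vset n. \<forall>b\<in>Vset n. a \<noteq> b \<and> {a, b} \<in> E \<longrightarrow>
        (if i = Half then inner_n n (v a) (v b) \<le> - 1 / (k - 1)
         else inner_n n (v a) (v b) = - 1 / (k - 1))) \<and>
     (i = Two \<longrightarrow> (\<forall>a\<in>Vset n. \<forall>b\<in>Vset n. a \<noteq> b \<and> {a, b} \<notin> E \<longrightarrow>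
        inner_n n (v a) (v b) \<ge> - 1 / (k - 1)))"

definition theta_bar :: "theta_index \<Rightarrow> nat \<Rightarrow> nat set set \<Rightarrow> real" where
  "theta_bar i n E = Inf {k. k > 1 \<and> (\<exists>v. vector_coloring i n E k v)}"

definition theta :: "theta_index \<Rightarrow> nat \<Rightarrow> nat set set \<Rightarrow> real" where
  "theta i n E = theta_bar i n (complement n E)"

end

theory Submission
  imports Defs "HOL-Probability.Hoeffding"
begin


lemma exists_orth_aux:
  fixes ws :: "(nat \<Rightarrow> real) list"
  shows "length ws = k \<Longrightarrow> finite I \<Longrightarrow> length ws < card I \<Longrightarrow>
    \<exists>z. (\<exists>c\<in>I. z c \<noteq> 0) \<and> (\<forall>w\<in>set ws. (\<Sum>c\<in>I. z c * w c) = 0)"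
proof (induction k arbitrary: ws I)
  case 0
  then obtain c where "c \<in> I" by fastforce
  then show ?case using 0 by (intro exI[of _ "\<lambda>_. 1"]) auto
next
  case (Suc k)
  then obtain w ws0 where wsd: "ws = w # ws0" by (cases ws) auto
  have IH: "\<And>(ws :: (nat \<Rightarrow> real) list) (I :: nat set). length ws = k \<Longrightarrow> finite I \<Longrightarrow> length ws < card I \<Longrightarrow>
    \<exists>z. (\<exists>c\<in>I. z c \<noteq> 0) \<and> (\<forall>w\<in>set ws. (\<Sum>c\<in>I. z c * w c) = 0)" using Suc.IH by blast
  have Cprems: "finite I" "length (w # ws0) < card I" "length ws0 = k" using Suc.prems wsd by auto
  show ?case
  proof (cases "\<forall>c\<in>I. w c = 0")
    case True
    from IH[of ws0 I] Cprems obtain z where z: "\<exists>c\<in>I. z c \<noteq> 0"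
      "\<forall>w\<in>set ws0. (\<Sum>c\<in>I. z c * w c) = 0" by auto
    show ?thesis using z True wsd by (intro exI[of _ z]) auto
  next
    case False
    then obtain p where p: "p \<in> I" "w p \<noteq> 0" by auto
    define I' where "I' = I - {p}"
    define ws' where "ws' = map (\<lambda>u c. u c - (u p / w p) * w c) ws0"
    have fI': "finite I'" using Cprems by (simp add: I'_def)
    have cI': "card I' = card I - 1" using p Cprems by (simp add: I'_def)
    have "length ws' < card I'" using Cprems cI' by (simp add: ws'_def)
    from IH[OF _ fI' this] obtain z' where z': "\<exists>c\<in>I'. z' c \<noteq> 0"
      "\<forall>w\<in>set ws'. (\<Sum>c\<in>I'. z' c * w c) = 0" using Cprems by (auto simp: ws'_def)
    define S where "S = (\<Sum>c\<in>I'. z' c * w c)"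
    define z where "z = z'(p := - S / w p)"
    have split: "(\<Sum>c\<in>I. z c * u c) = z p * u p + (\<Sum>c\<in>I'. z' c * u c)" for u
    proof -
      have "(\<Sum>c\<in>I. z c * u c) = z p * u p + (\<Sum>c\<in>I'. z c * u c)"
        using p Cprems unfolding I'_def by (simp add: sum.remove)
      also have "(\<Sum>c\<in>I'. z c * u c) = (\<Sum>c\<in>I'. z' c * u c)"
        by (rule sum.cong) (auto simp: z_def I'_def)
      finally show ?thesis .
    qed
    have "(\<Sum>c\<in>I. z c * w c) = 0"
      using p unfolding split by (simp add: z_def S_def)
    moreover have "(\<Sum>c\<in>I. z c * u c) = 0" if u: "u \<in> set ws0" for u
    proof -
      have "(\<lambda>c. u c - (u p / w p) * w c) \<in> set ws'" using u by (simp add: ws'_def)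
      hence "(\<Sum>c\<in>I'. z' c * (u c - (u p / w p) * w c)) = 0" using z' by auto
      hence "(\<Sum>c\<in>I'. z' c * u c) - (u p / w p) * S = 0"
        by (simp add: S_def algebra_simps sum_subtractf sum_distrib_left)
      thus ?thesis using p unfolding split by (simp add: z_def field_simps)
    qed
    moreover have "\<exists>c\<in>I. z c \<noteq> 0" using z' by (auto simp: z_def I'_def)
    ultimately show ?thesis using wsd by (intro exI[of _ z]) auto
  qed
qed

lemma exists_orth:
  fixes ws :: "(nat \<Rightarrow> real) list"
  shows "finite I \<Longrightarrow> length ws < card I \<Longrightarrow>
    \<exists>z. (\<exists>c\<in>I. z c \<noteq> 0) \<and> (\<forall>w\<in>set ws. (\<Sum>c\<in>I. z c * w c) = 0)"
  using exists_orth_aux by blast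

lemma inner_n_sym: "inner_n n x y = inner_n n y x"
  by (simp add: inner_n_def mult.commute)

lemma orth_unit:
  assumes "a \<in> Vset n"
  shows "\<exists>u. inner_n n u u = 1 \<and> (\<forall>x\<in>Vset n - {a}. inner_n n u (v x) = 0)"
proof -
  define ws where "ws = map v (sorted_list_of_set (Vset n - {a}))"
  have "length ws = card (Vset n - {a})" by (simp add: ws_def)
  also have "\<dots> = n - 1" using assms by (simp add: Vset_def)
  finally have "length ws < card {..<n}" using assms by (auto simp: Vset_def)
  from exists_orth[OF _ this] obtain z where z: "\<exists>c\<in>{..<n}. z c \<noteq> 0"
    "\<forall>w\<in>set ws. (\<Sum>c\<in>{..<n}. z c * w c) = 0" by auto
  define s where "s = inner_n n z z"
  from z(1) obtain c0 where c0: "c0 < n" "z c0 \<noteq> 0" by auto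
  have "0 < z c0 * z c0" using c0 by (metis not_real_square_gt_zero)
  also have "\<dots> \<le> s" unfolding s_def inner_n_def
    using c0 by (intro member_le_sum) auto
  finally have s: "s > 0" .
  define u where "u = (\<lambda>c. z c / sqrt s)"
  have "inner_n n u u = s / (sqrt s * sqrt s)"
    by (simp add: u_def inner_n_def s_def sum_divide_distrib)
  also have "\<dots> = 1" using s by simp
  finally have 1: "inner_n n u u = 1" .
  have "inner_n n u (v x) = 0" if "x \<in> Vset n - {a}" for x
  proof -
    have "v x \<in> set ws" using that by (simp add: ws_def Vset_def)
    hence "(\<Sum>c<n. z c * v x c) = 0" using z(2) by auto
    thus ?thesis by (simp add: u_def inner_n_def sum_divide_distrib[symmetric])
  qed
  with 1 show ?thesis by blast
qed



lemma inner_n_comb: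
  "inner_n n (\<lambda>c. \<alpha> * p c - \<beta> * q c) (\<lambda>c. \<alpha> * p' c - \<beta> * q' c) =
   \<alpha>\<^sup>2 * inner_n n p p' - \<alpha> * \<beta> * inner_n n p q' - \<alpha> * \<beta> * inner_n n q p' + \<beta>\<^sup>2 * inner_n n q q'"
proof -
  have "inner_n n (\<lambda>c. \<alpha> * p c - \<beta> * q c) (\<lambda>c. \<alpha> * p' c - \<beta> * q' c) =
    (\<Sum>c<n. \<alpha>\<^sup>2 * (p c * p' c) - \<alpha> * \<beta> * (p c * q' c) - \<alpha> * \<beta> * (q c * p' c) + \<beta>\<^sup>2 * (q c * q' c))"
    unfolding inner_n_def by (rule sum.cong) (auto simp: algebra_simps power2_eq_square)
  also have "\<dots> = \<alpha>\<^sup>2 * inner_n n p p' - \<alpha> * \<beta> * inner_n n p q' - \<alpha> * \<beta> * inner_n n q p' + \<beta>\<^sup>2 * inner_n n q q'"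
    unfolding inner_n_def by (simp add: sum.distrib sum_subtractf sum_distrib_left)
  finally show ?thesis .
qed

lemma inner_n_comb1:
  "inner_n n (\<lambda>c. \<alpha> * p c - \<beta> * q c) u = \<alpha> * inner_n n p u - \<beta> * inner_n n q u"
  unfolding inner_n_def by (simp add: sum_subtractf sum_distrib_left algebra_simps)

lemma inner_n_comb1':
  "inner_n n u (\<lambda>c. \<alpha> * p c - \<beta> * q c) = \<alpha> * inner_n n u p - \<beta> * inner_n n u q"
  unfolding inner_n_def by (simp add: sum_subtractf sum_distrib_left algebra_simps)

lemma col_mono:
  assumes "vector_coloring i n H' k v"
    and "\<forall>a\<in>Vset n. \<forall>b\<in>Vset n. a \<noteq> b \<longrightarrow> {a,b} \<in> H \<longrightarrow> {a,b} \<in> H'"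
  shows "vector_coloring i n H k v"
proof -
  have A: "\<forall>a\<in>Vset n. inner_n n (v a) (v a) = 1" and
    B: "\<forall>a\<in>Vset n. \<forall>b\<in>Vset n. a \<noteq> b \<and> {a, b} \<in> H' \<longrightarrow>
        (if i = Half then inner_n n (v a) (v b) \<le> - 1 / (k - 1)
         else inner_n n (v a) (v b) = - 1 / (k - 1))" and
    C: "i = Two \<longrightarrow> (\<forall>a\<in>Vset n. \<forall>b\<in>Vset n. a \<noteq> b \<and> {a, b} \<notin> H' \<longrightarrow>
        inner_n n (v a) (v b) \<ge> - 1 / (k - 1))"
    using assms(1) unfolding vector_coloring_def by blast+
  have B': "\<forall>a\<in>Vset n. \<forall>b\<in>Vset n. a \<noteq> b \<and> {a, b} \<in> H \<longrightarrow>
        (if i = Half then inner_n n (v a) (v b) \<le> - 1 / (k - 1)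
         else inner_n n (v a) (v b) = - 1 / (k - 1))"
    using B assms(2) by blast
  have C': "i = Two \<longrightarrow> (\<forall>a\<in>Vset n. \<forall>b\<in>Vset n. a \<noteq> b \<and> {a, b} \<notin> H \<longrightarrow>
        inner_n n (v a) (v b) \<ge> - 1 / (k - 1))"
  proof (intro impI ballI allI)
    fix a b assume "i = Two" "a \<in> Vset n" "b \<in> Vset n" "a \<noteq> b \<and> {a, b} \<notin> H"
    thus "inner_n n (v a) (v b) \<ge> - 1 / (k - 1)"
      using B C by (cases "{a,b} \<in> H'") auto
  qed
  show ?thesis unfolding vector_coloring_def using A B' C' by blast
qed

lemma col_join:
  assumes col: "vector_coloring i n H' k v" and k: "k > 1" and a: "a \<in> Vset n"
    and agree: "\<forall>x\<in>Vset n. \<forall>y\<in>Vset n. x \<noteq> y \<longrightarrow> x \<noteq> a \<longrightarrow> y \<noteq> a \<longrightarrow> ({x,y} \<in> H \<longleftrightarrow> {x,y} \<in> H')"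
    and u1: "inner_n n u u = 1" and u0: "\<forall>x\<in>Vset n - {a}. inner_n n u (v x) = 0"
  shows "vector_coloring i n H (k+1) (\<lambda>x. if x = a then u else (\<lambda>c. sqrt (1 - 1/k\<^sup>2) * v x c - (1/k) * u c))"
proof -
  define \<alpha> where "\<alpha> = sqrt (1 - 1/k\<^sup>2)"
  define \<beta> where "\<beta> = 1 / k"
  define w where "w = (\<lambda>x. if x = a then u else (\<lambda>c. \<alpha> * v x c - \<beta> * u c))"
  have kk: "1/k\<^sup>2 < 1" using k by (simp add: power_one_over[symmetric] power_less_one_iff)
  have a2: "\<alpha>\<^sup>2 = 1 - 1/k\<^sup>2" using kk by (simp add: \<alpha>_def)
  have a2pos: "\<alpha>\<^sup>2 > 0" using kk a2 by simp
  have u0': "inner_n n (v x) u = 0" if "x \<in> Vset n" "x \<noteq> a" for x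
    using u0 that inner_n_sym[of n u "v x"] by auto
  have vv: "inner_n n (v x) (v x) = 1" if "x \<in> Vset n" for x
    using col that by (simp add: vector_coloring_def)
  have key: "\<alpha>\<^sup>2 * t + \<beta>\<^sup>2 - (- 1 / (k + 1 - 1)) = \<alpha>\<^sup>2 * (t - (- 1 / (k - 1)))" for t
    using k unfolding a2 \<beta>_def by (simp add: field_simps power2_eq_square)
  have W1: "inner_n n (w x) (w x) = 1" if "x \<in> Vset n" for x
  proof (cases "x = a")
    case True thus ?thesis by (simp add: w_def u1)
  next
    case False
    have "inner_n n (w x) (w x) = \<alpha>\<^sup>2 * 1 - 0 - 0 + \<beta>\<^sup>2 * 1"
      using False that u0 u0' u1 vv[OF that]
      by (simp add: w_def inner_n_comb u0')
    thus ?thesis using a2 by (simp add: \<beta>_def power_divide)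
  qed
  have W2: "inner_n n (w x) (w y) = \<alpha>\<^sup>2 * inner_n n (v x) (v y) + \<beta>\<^sup>2"
    if "x \<in> Vset n" "y \<in> Vset n" "x \<noteq> a" "y \<noteq> a" for x y
    using that u0 u1 by (simp add: w_def inner_n_comb u0')
  have W3: "inner_n n (w x) (w y) = - 1 / (k + 1 - 1)"
    if "x \<in> Vset n" "y \<in> Vset n" "x \<noteq> y" "x = a \<or> y = a" for x y
  proof -
    have "inner_n n (w x) (w y) = - \<beta>"
      using that u0 u1 by (auto simp: w_def inner_n_comb1 inner_n_comb1' u0')
    thus ?thesis by (simp add: \<beta>_def)
  qed
  have edge: "(if i = Half then inner_n n (w x) (w y) \<le> - 1 / (k + 1 - 1)
         else inner_n n (w x) (w y) = - 1 / (k + 1 - 1))"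
    if xy: "x \<in> Vset n" "y \<in> Vset n" "x \<noteq> y" "{x,y} \<in> H" for x y
  proof (cases "x = a \<or> y = a")
    case True thus ?thesis using W3 xy by simp
  next
    case False
    hence e: "{x,y} \<in> H'" using agree xy by blast
    have c: "(if i = Half then inner_n n (v x) (v y) \<le> - 1 / (k - 1)
         else inner_n n (v x) (v y) = - 1 / (k - 1))"
      using col xy e unfolding vector_coloring_def by blast
    have "inner_n n (w x) (w y) - (- 1 / (k + 1 - 1)) = \<alpha>\<^sup>2 * (inner_n n (v x) (v y) - (- 1 / (k - 1)))"
      using W2 xy False key by simp
    moreover have "i = Half \<Longrightarrow> \<alpha>\<^sup>2 * (inner_n n (v x) (v y) - (- 1 / (k - 1))) \<le> 0"
      using c a2pos by (intro mult_nonneg_nonpos) auto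
    ultimately show ?thesis using c
      by (cases "i = Half") auto
  qed
  have nonedge: "inner_n n (w x) (w y) \<ge> - 1 / (k + 1 - 1)"
    if i2: "i = Two" and xy: "x \<in> Vset n" "y \<in> Vset n" "x \<noteq> y" "{x,y} \<notin> H" for x y
  proof (cases "x = a \<or> y = a")
    case True thus ?thesis using W3 xy by simp
  next
    case False
    hence e: "{x,y} \<notin> H'" using agree xy by blast
    have c: "inner_n n (v x) (v y) \<ge> - 1 / (k - 1)"
      using col xy e i2 unfolding vector_coloring_def by blast
    have "inner_n n (w x) (w y) - (- 1 / (k + 1 - 1)) = \<alpha>\<^sup>2 * (inner_n n (v x) (v y) - (- 1 / (k - 1)))"
      using W2 xy False key by simp
    moreover have "\<alpha>\<^sup>2 * (inner_n n (v x) (v y) - (- 1 / (k - 1))) \<ge> 0"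
      using c a2pos by (intro mult_nonneg_nonneg) auto
    ultimately show ?thesis by linarith
  qed
  have "vector_coloring i n H (k+1) w"
    unfolding vector_coloring_def using W1 edge nonedge by blast
  thus ?thesis unfolding w_def \<alpha>_def \<beta>_def by simp
qed



lemma col_all_equal:
  assumes "\<forall>a\<in>Vset n. inner_n n (v a) (v a) = 1"
    and "\<forall>a\<in>Vset n. \<forall>b\<in>Vset n. a \<noteq> b \<longrightarrow> inner_n n (v a) (v b) = - 1 / (k - 1)"
  shows "vector_coloring i n H k v"
  using assms unfolding vector_coloring_def by auto

lemma simplex_gram:
  fixes n :: nat and p p' :: nat
  assumes "p < n" "p' < n"
  shows "(\<Sum>c<n. ((if c = p then 1 else 0) - q) * ((if c = p' then 1 else 0) - (q::real))) =
     (if p = p' then 1 else 0) - 2 * q + real n * q\<^sup>2"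
proof -
  have "(\<Sum>c<n. ((if c = p then 1 else 0) - q) * ((if c = p' then 1 else 0) - (q::real))) =
     (\<Sum>c<n. (if c = p \<and> c = p' then 1 else 0) - q * (if c = p' then 1 else 0)
      - q * (if c = p then 1 else 0) + q\<^sup>2)"
    by (rule sum.cong) (auto simp: algebra_simps power2_eq_square)
  also have "\<dots> = (\<Sum>c<n. (if c = p \<and> c = p' then 1 else 0)) - (\<Sum>c<n. q * (if c = p' then 1 else 0))
      - (\<Sum>c<n. q * (if c = p then 1 else 0)) + (\<Sum>c<n. q\<^sup>2)"
    by (simp only: sum.distrib sum_subtractf)
  also have "(\<Sum>c<n. (if c = p \<and> c = p' then 1 else 0)) = (if p = p' then 1 else (0::real))"
    using assms by (cases "p = p'") (auto intro!: sum.neutral)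
  also have "(\<Sum>c<n. q * (if c = p' then 1 else 0)) = q" using assms by (simp add: sum_distrib_left[symmetric])
  also have "(\<Sum>c<n. q * (if c = p then 1 else 0)) = q" using assms by (simp add: sum_distrib_left[symmetric])
  finally show ?thesis by simp
qed

lemma col_exists:
  assumes "n > 0"
  shows "\<exists>k v. k > 1 \<and> vector_coloring i n H k v"
proof (cases "n = 1")
  case True
  have "vector_coloring i n H 2 (\<lambda>x c. 1)"
    by (rule col_all_equal) (auto simp: True Vset_def inner_n_def)
  thus ?thesis by (intro exI[of _ 2]) auto
next
  case False
  hence n2: "n \<ge> 2" using assms by simp
  define q :: real where "q = 1 / real n"
  define d where "d = 1 - q"
  have d: "d > 0" using n2 by (simp add: d_def q_def)
  define v :: "nat \<Rightarrow> nat \<Rightarrow> real" where "v = (\<lambda>x c. ((if c = x - 1 then 1 else 0) - q) / sqrt d)"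
  have G: "inner_n n (v x) (v y) = ((if x = y then 1 else 0) - q) / d"
    if "x \<in> Vset n" "y \<in> Vset n" for x y
  proof -
    have xy: "x - 1 < n" "y - 1 < n" "(x - 1 = y - 1) = (x = y)" using that by (auto simp: Vset_def)
    have "inner_n n (v x) (v y) = (\<Sum>c<n. ((if c = x - 1 then 1 else 0) - q) * ((if c = y - 1 then 1 else 0) - q)) / d"
      unfolding inner_n_def v_def using d by (simp add: sum_divide_distrib[symmetric] real_sqrt_mult[symmetric])
    also have "\<dots> = ((if x = y then 1 else 0) - 2 * q + real n * q\<^sup>2) / d"
      using simplex_gram[OF xy(1,2)] xy(3) by simp
    also have "real n * q\<^sup>2 = q" using n2 by (simp add: q_def power2_eq_square)
    finally show ?thesis by simp
  qed
  have "vector_coloring i n H (real n) v"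
  proof (rule col_all_equal)
    show "\<forall>a\<in>Vset n. inner_n n (v a) (v a) = 1" using G d by (simp add: d_def)
    show "\<forall>a\<in>Vset n. \<forall>b\<in>Vset n. a \<noteq> b \<longrightarrow> inner_n n (v a) (v b) = - 1 / (real n - 1)"
    proof (intro ballI impI)
      fix a b assume ab: "a \<in> Vset n" "b \<in> Vset n" "a \<noteq> b"
      have "inner_n n (v a) (v b) = - q / d" using G[OF ab(1,2)] ab(3) by simp
      also have "- q / d = - 1 / (real n - 1)" using n2 by (simp add: q_def d_def field_simps)
      finally show "inner_n n (v a) (v b) = - 1 / (real n - 1)" .
    qed
  qed
  thus ?thesis using n2 by (intro exI[of _ "real n"]) auto
qed

definition feas :: "theta_index \<Rightarrow> nat \<Rightarrow> nat set set \<Rightarrow> real set" where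
  "feas i n H = {k. k > 1 \<and> (\<exists>v. vector_coloring i n H k v)}"

lemma complement_mem:
  assumes "x \<noteq> y"
  shows "{x,y} \<in> complement n E \<longleftrightarrow> x \<in> Vset n \<and> y \<in> Vset n \<and> {x,y} \<notin> E"
proof
  assume "{x,y} \<in> complement n E"
  then obtain a b where ab: "{x,y} = {a,b}" "a \<in> Vset n" "b \<in> Vset n" "a \<noteq> b" "{a,b} \<notin> E"
    unfolding complement_def by blast
  thus "x \<in> Vset n \<and> y \<in> Vset n \<and> {x,y} \<notin> E" by (auto simp: doubleton_eq_iff insert_commute)
next
  assume "x \<in> Vset n \<and> y \<in> Vset n \<and> {x,y} \<notin> E"
  thus "{x,y} \<in> complement n E" using assms unfolding complement_def by blast
qed

lemma theta_insert:
  assumes n: "n > 0"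
  shows "theta i n (insert e E) \<le> theta i n E" "theta i n E \<le> theta i n (insert e E) + 1"
proof -
  define H where "H = complement n E"
  define H' where "H' = complement n (insert e E)"
  have sub: "\<forall>a\<in>Vset n. \<forall>b\<in>Vset n. a \<noteq> b \<longrightarrow> {a,b} \<in> H' \<longrightarrow> {a,b} \<in> H"
  proof (intro ballI impI)
    fix a b assume "a \<in> Vset n" "b \<in> Vset n" "a \<noteq> b" "{a,b} \<in> H'"
    thus "{a,b} \<in> H" unfolding H_def H'_def using complement_mem[of a b] by simp
  qed
  obtain a where a: "a \<in> Vset n" "\<forall>x\<in>Vset n. \<forall>y\<in>Vset n. x \<noteq> a \<longrightarrow> y \<noteq> a \<longrightarrow> {x,y} \<noteq> e"
  proof (cases "e \<inter> Vset n = {}")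
    case True
    have "1 \<in> Vset n" using n by (simp add: Vset_def)
    thus ?thesis using True that[of 1] by blast
  next
    case False
    then obtain a where "a \<in> e" "a \<in> Vset n" by blast
    thus ?thesis using that[of a] by blast
  qed
  have agree: "\<forall>x\<in>Vset n. \<forall>y\<in>Vset n. x \<noteq> y \<longrightarrow> x \<noteq> a \<longrightarrow> y \<noteq> a \<longrightarrow> ({x,y} \<in> H \<longleftrightarrow> {x,y} \<in> H')"
  proof (intro ballI impI)
    fix x y assume xy: "x \<in> Vset n" "y \<in> Vset n" "x \<noteq> y" "x \<noteq> a" "y \<noteq> a"
    hence "{x,y} \<noteq> e" using a(2) by blast
    thus "{x,y} \<in> H \<longleftrightarrow> {x,y} \<in> H'" unfolding H_def H'_def using complement_mem[of x y] xy by simp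
  qed
  have FH: "feas i n H \<subseteq> feas i n H'"
  proof
    fix k assume "k \<in> feas i n H"
    then obtain v where "k > 1" "vector_coloring i n H k v" by (auto simp: feas_def)
    thus "k \<in> feas i n H'" using col_mono[OF _ sub] by (auto simp: feas_def)
  qed
  have ne: "feas i n H' \<noteq> {}" "feas i n H \<noteq> {}"
    using col_exists[OF n] unfolding feas_def by blast+
  have bdd: "bdd_below (feas i n H')" "bdd_below (feas i n H)"
    unfolding feas_def bdd_below_def by (auto intro!: exI[of _ 1])
  have tH: "theta i n E = Inf (feas i n H)" "theta i n (insert e E) = Inf (feas i n H')"
    by (simp_all add: theta_def theta_bar_def feas_def H_def H'_def)
  show "theta i n (insert e E) \<le> theta i n E"
    unfolding tH by (rule cInf_superset_mono[OF ne(2) bdd(1) FH])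
  have "Inf (feas i n H) \<le> k + 1" if "k \<in> feas i n H'" for k
  proof -
    from that obtain v where k: "k > 1" "vector_coloring i n H' k v" by (auto simp: feas_def)
    obtain u where u: "inner_n n u u = 1" "\<forall>x\<in>Vset n - {a}. inner_n n u (v x) = 0"
      using orth_unit[OF a(1)] by blast
    have "k + 1 \<in> feas i n H"
      using col_join[OF k(2) k(1) a(1) agree u] k(1) unfolding feas_def by auto
    thus ?thesis by (rule cInf_lower[OF _ bdd(2)])
  qed
  hence "Inf (feas i n H) - 1 \<le> Inf (feas i n H')"
    using cInf_greatest[OF ne(1), of "Inf (feas i n H) - 1"] by fastforce
  thus "theta i n E \<le> theta i n (insert e E) + 1" unfolding tH by simp
qed

lemma theta_union:
  assumes n: "n > 0" and "finite D"
  shows "\<bar>theta i n (E \<union> D) - theta i n E\<bar> \<le> card D"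
  using assms(2)
proof (induction D rule: finite_induct)
  case empty thus ?case by simp
next
  case (insert d D)
  have "E \<union> insert d D = insert d (E \<union> D)" by auto
  thus ?case using insert theta_insert[OF n, where i=i and e=d and E="E \<union> D"] by auto
qed

lemma theta_lip:
  assumes n: "n > 0" and "finite E1" "finite E2"
  shows "\<bar>theta i n E1 - theta i n E2\<bar> \<le> card (E1 - E2) + card (E2 - E1)"
proof -
  have "E1 = (E1 \<inter> E2) \<union> (E1 - E2)" "E2 = (E1 \<inter> E2) \<union> (E2 - E1)" by auto
  hence "\<bar>theta i n E1 - theta i n (E1 \<inter> E2)\<bar> \<le> card (E1 - E2)"
        "\<bar>theta i n E2 - theta i n (E1 \<inter> E2)\<bar> \<le> card (E2 - E1)"
    using theta_union[OF n, of "E1 - E2" i "E1 \<inter> E2"] theta_union[OF n, of "E2 - E1" i "E1 \<inter> E2"] assms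
    by auto
  thus ?thesis by linarith
qed



definition matching :: "'a set \<Rightarrow> 'a set set \<Rightarrow> bool" where
  "matching S \<rho> \<longleftrightarrow> (\<forall>p\<in>\<rho>. p \<subseteq> S \<and> card p = 2) \<and> (\<forall>x\<in>S. \<exists>!p. p \<in> \<rho> \<and> x \<in> p)"

fun decode :: "'a list \<Rightarrow> nat list \<Rightarrow> 'a set set" where
  "decode (a # L) (x # xs) = insert {a, L ! x} (decode (tl (L[x := hd L])) xs)"
| "decode _ _ = {}"

fun Dset :: "nat \<Rightarrow> nat list set" where
  "Dset 0 = {[]}"
| "Dset (Suc k) = (\<lambda>(x, xs). x # xs) ` ({..<2*k+1} \<times> Dset k)"

lemma Dset_Suc_iff: "ys \<in> Dset (Suc k) \<longleftrightarrow> (\<exists>x xs. ys = x # xs \<and> x < 2*k+1 \<and> xs \<in> Dset k)"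
  by auto

lemma finite_Dset: "finite (Dset k)"
  by (induction k) auto

lemma Dset_nonempty: "Dset k \<noteq> {}"
  by (induction k) auto

lemma card_Dset_Suc: "card (Dset (Suc k)) = (2*k+1) * card (Dset k)"
proof -
  have "inj_on (\<lambda>(x, xs). x # xs) ({..<2*k+1} \<times> Dset k)" by (auto simp: inj_on_def)
  hence "card (Dset (Suc k)) = card ({..<2*k+1} \<times> Dset k)" by (simp add: card_image)
  thus ?thesis by (simp add: card_cartesian_product)
qed

lemma finite_decode: "finite (decode L xs)"
  by (induction L xs rule: decode.induct) auto

lemma rest_props:
  assumes "distinct L" "x < length L"
  shows "set (tl (L[x := hd L])) = set L - {L ! x} \<and> distinct (tl (L[x := hd L]))"
proof -
  obtain b L2 where L: "L = b # L2" using assms by (cases L) auto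
  show ?thesis
  proof (cases x)
    case 0
    thus ?thesis using assms L by auto
  next
    case (Suc y)
    have y: "y < length L2" using assms L Suc by simp
    have "tl (L[x := hd L]) = L2[y := b]" using L Suc by simp
    moreover have "set (L2[y := b]) = insert b (set L2 - {L2 ! y})"
      using assms L y by (simp add: set_update_distinct)
    moreover have "b \<noteq> L2 ! y" using assms L y by auto
    moreover have "distinct (L2[y := b])"
      using assms L y by (auto intro!: distinct_list_update)
    ultimately show ?thesis
      using L Suc by auto
  qed
qed

lemma matching_intro:
  assumes "\<forall>p\<in>\<rho>. p \<subseteq> S \<and> card p = 2" "\<And>x. x \<in> S \<Longrightarrow> \<exists>!p. p \<in> \<rho> \<and> x \<in> p"
  shows "matching S \<rho>"
  unfolding matching_def using assms by (intro conjI ballI) auto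

lemma matchingD1: "matching S \<rho> \<Longrightarrow> p \<in> \<rho> \<Longrightarrow> p \<subseteq> S \<and> card p = 2"
  unfolding matching_def by auto

lemma matchingD2: "matching S \<rho> \<Longrightarrow> x \<in> S \<Longrightarrow> \<exists>!p. p \<in> \<rho> \<and> x \<in> p"
  unfolding matching_def by auto

lemma matchingD3: "matching S \<rho> \<Longrightarrow> x \<in> S \<Longrightarrow> p \<in> \<rho> \<Longrightarrow> q \<in> \<rho> \<Longrightarrow> x \<in> p \<Longrightarrow> x \<in> q \<Longrightarrow> p = q"
  using matchingD2 by metis

lemma matchingD4: "matching S \<rho> \<Longrightarrow> x \<in> S \<Longrightarrow> \<exists>p. p \<in> \<rho> \<and> x \<in> p"
  using matchingD2 by metis

lemma matching_insert:
  assumes m: "matching T \<rho>" and ab: "a \<notin> T" "b \<notin> T" "a \<noteq> b"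
  shows "matching (insert a (insert b T)) (insert {a,b} \<rho>)"
proof (rule matching_intro)
  show "\<forall>p\<in>insert {a, b} \<rho>. p \<subseteq> insert a (insert b T) \<and> card p = 2"
    using matchingD1[OF m] ab by auto
  fix y assume y: "y \<in> insert a (insert b T)"
  show "\<exists>!p. p \<in> insert {a, b} \<rho> \<and> y \<in> p"
  proof (cases "y \<in> T")
    case False
    hence "y = a \<or> y = b" using y by auto
    moreover have "p = {a,b}" if "p \<in> insert {a, b} \<rho>" "y \<in> p" for p
      using that matchingD1[OF m] False by blast
    ultimately show ?thesis by (intro ex1I[of _ "{a,b}"]) blast+
  next
    case True
    then obtain p where p: "p \<in> \<rho>" "y \<in> p" using matchingD4[OF m] by blast
    have "y \<notin> {a,b}" using True ab by auto
    show ?thesis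
    proof (rule ex1I[of _ p])
      show "p \<in> insert {a, b} \<rho> \<and> y \<in> p" using p by blast
      fix q assume q: "q \<in> insert {a, b} \<rho> \<and> y \<in> q"
      hence "q \<in> \<rho>" using \<open>y \<notin> {a,b}\<close> by blast
      thus "q = p" using matchingD3[OF m True _ p(1) _ p(2)] q by blast
    qed
  qed
qed

lemma matching_remove:
  assumes m: "matching (insert a (insert b T)) \<rho>" and ab: "a \<notin> T" "b \<notin> T" "a \<noteq> b"
    and p0: "{a,b} \<in> \<rho>"
  shows "matching T (\<rho> - {{a,b}})"
proof (rule matching_intro)
  have uniq: "q = {a,b}" if "q \<in> \<rho>" "a \<in> q \<or> b \<in> q" for q
    using that matchingD3[OF m _ that(1) p0] by auto
  show "\<forall>p\<in>\<rho> - {{a, b}}. p \<subseteq> T \<and> card p = 2"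
  proof
    fix p assume p: "p \<in> \<rho> - {{a, b}}"
    hence "p \<subseteq> insert a (insert b T)" "card p = 2" using matchingD1[OF m] by auto
    moreover have "a \<notin> p" "b \<notin> p" using uniq p by auto
    ultimately show "p \<subseteq> T \<and> card p = 2" by auto
  qed
  fix y assume y: "y \<in> T"
  then obtain p where p: "p \<in> \<rho>" "y \<in> p" using matchingD4[OF m] by blast
  have "p \<noteq> {a,b}" using p y ab by auto
  have yT: "y \<in> insert a (insert b T)" using y by blast
  show "\<exists>!p. p \<in> \<rho> - {{a, b}} \<and> y \<in> p"
  proof (rule ex1I[of _ p])
    show "p \<in> \<rho> - {{a, b}} \<and> y \<in> p" using p \<open>p \<noteq> {a,b}\<close> by blast
    fix q assume q: "q \<in> \<rho> - {{a, b}} \<and> y \<in> q"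
    thus "q = p" using matchingD3[OF m yT _ p(1) _ p(2)] by blast
  qed
qed

lemma matching_sub: "matching S \<rho> \<Longrightarrow> p \<in> \<rho> \<Longrightarrow> p \<subseteq> S"
  unfolding matching_def by auto

lemma decode_Cons_split:
  assumes "distinct L" "length L = 2 * Suc k" "xs \<in> Dset (Suc k)"
  obtains a L1 x xs' where "L = a # L1" "xs = x # xs'" "x < length L1" "xs' \<in> Dset k"
    "length L1 = 2*k+1" "a \<notin> set L1" "distinct L1"
    "decode L xs = insert {a, L1 ! x} (decode (tl (L1[x := hd L1])) xs')"
proof -
  obtain a L1 where L: "L = a # L1" using assms by (cases L) auto
  obtain x xs' where xs: "xs = x # xs'" "x < 2*k+1" "xs' \<in> Dset k" using assms(3) Dset_Suc_iff by blast
  show ?thesis using that[of a L1 x xs'] L xs assms by auto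
qed

lemma decode_matching:
  "distinct L \<Longrightarrow> length L = 2*k \<Longrightarrow> xs \<in> Dset k \<Longrightarrow> matching (set L) (decode L xs)"
proof (induction k arbitrary: L xs)
  case 0
  thus ?case by (auto simp: matching_def)
next
  case (Suc k)
  obtain a L1 x xs' where d: "L = a # L1" "xs = x # xs'"
    "x < length L1" "xs' \<in> Dset k" "length L1 = 2*k+1" "a \<notin> set L1" "distinct L1"
    "decode L xs = insert {a, L1 ! x} (decode (tl (L1[x := hd L1])) xs')"
      by (rule decode_Cons_split[OF Suc.prems])
  define R where "R = tl (L1[x := hd L1])"
  have R: "set R = set L1 - {L1 ! x}" "distinct R" "length R = 2*k"
    using rest_props[OF d(7) d(3)] d(5) d(3) by (auto simp: R_def)
  have m: "matching (set R) (decode R xs')" using Suc.IH[OF R(2,3) d(4)] .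
  have b: "L1 ! x \<in> set L1" using d(3) by simp
  have "matching (insert a (insert (L1 ! x) (set R))) (insert {a, L1 ! x} (decode R xs'))"
    using matching_insert[OF m, of a "L1 ! x"] R(1) d(6) b by blast
  moreover have "insert a (insert (L1 ! x) (set R)) = set L" using R(1) b d(1) by auto
  ultimately show ?case using d(8) by (simp add: R_def)
qed

lemma decode_inj:
  "distinct L \<Longrightarrow> length L = 2*k \<Longrightarrow> inj_on (decode L) (Dset k)"
proof (induction k arbitrary: L)
  case 0
  thus ?case by simp
next
  case (Suc k)
  show ?case
  proof (rule inj_onI)
    fix xs ys assume xs: "xs \<in> Dset (Suc k)" and ys: "ys \<in> Dset (Suc k)" and eq: "decode L xs = decode L ys"
    obtain a L1 x xs' where d: "L = a # L1" "xs = x # xs'"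
      "x < length L1" "xs' \<in> Dset k" "length L1 = 2*k+1" "a \<notin> set L1" "distinct L1"
      "decode L xs = insert {a, L1 ! x} (decode (tl (L1[x := hd L1])) xs')"
      by (rule decode_Cons_split[OF Suc.prems xs])
    obtain a' L1' y ys' where e: "L = a' # L1'" "ys = y # ys'"
      "y < length L1'" "ys' \<in> Dset k" "length L1' = 2*k+1" "a' \<notin> set L1'" "distinct L1'"
      "decode L ys = insert {a', L1' ! y} (decode (tl (L1'[y := hd L1'])) ys')"
      by (rule decode_Cons_split[OF Suc.prems ys])
    have [simp]: "a' = a" "L1' = L1" using d(1) e(1) by auto
    define R1 where "R1 = tl (L1[x := hd L1])"
    define R2 where "R2 = tl (L1[y := hd L1])"
    have R1: "set R1 = set L1 - {L1 ! x}" "distinct R1" "length R1 = 2*k"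
      using rest_props[OF d(7) d(3)] d(5) d(3) by (auto simp: R1_def)
    have R2: "set R2 = set L1 - {L1 ! y}" "distinct R2" "length R2 = 2*k"
      using rest_props[OF d(7) e(3)[simplified]] e(3) d(5) by (auto simp: R2_def)
    have m1: "matching (set R1) (decode R1 xs')" using decode_matching[OF R1(2,3) d(4)] .
    have m2: "matching (set R2) (decode R2 ys')" using decode_matching[OF R2(2,3) e(4)] .
    have na1: "\<forall>p\<in>decode R1 xs'. a \<notin> p" using matching_sub[OF m1] R1(1) d(6) by blast
    have na2: "\<forall>p\<in>decode R2 ys'. a \<notin> p" using matching_sub[OF m2] R2(1) d(6) by blast
    have eq2: "insert {a, L1 ! x} (decode R1 xs') = insert {a, L1 ! y} (decode R2 ys')"
      using eq d(8) e(8) by (simp add: R1_def R2_def)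
    hence "{a, L1 ! x} \<in> insert {a, L1 ! y} (decode R2 ys')" by blast
    hence "{a, L1 ! x} = {a, L1 ! y}" using na2 by blast
    hence "L1 ! x = L1 ! y" using d(6) d(3) e(3) by (auto simp: doubleton_eq_iff)
    hence xy: "x = y" using d(7) d(3) e(3) by (simp add: nth_eq_iff_index_eq)
    hence "R1 = R2" by (simp add: R1_def R2_def)
    have "{a, L1 ! x} \<notin> decode R1 xs'" "{a, L1 ! x} \<notin> decode R2 ys'" using na1 na2 by auto
    hence "decode R1 xs' = decode R2 ys'" using eq2 xy
      by (metis insert_ident)
    hence "xs' = ys'" using Suc.IH[OF R1(2,3)] d(4) e(4) \<open>R1 = R2\<close> by (auto dest: inj_onD)
    thus "xs = ys" using d(2) e(2) xy by simp
  qed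
qed

lemma decode_surj:
  "distinct L \<Longrightarrow> length L = 2*k \<Longrightarrow> matching (set L) \<rho> \<Longrightarrow> \<exists>xs\<in>Dset k. decode L xs = \<rho>"
proof (induction k arbitrary: L \<rho>)
  case 0
  hence "\<rho> = {}" unfolding matching_def by (auto simp: card_2_iff)
  thus ?case by simp
next
  case (Suc k)
  obtain a L1 where L: "L = a # L1" using Suc.prems by (cases L) auto
  have aL1: "a \<notin> set L1" "distinct L1" "length L1 = 2*k+1" using Suc.prems L by auto
  obtain p where p: "p \<in> \<rho>" "a \<in> p" using Suc.prems(3) L unfolding matching_def by auto
  have "card p = 2" "p \<subseteq> set L" using Suc.prems(3) p unfolding matching_def by auto
  then obtain u v where uv: "p = {u,v}" "u \<noteq> v" by (auto simp: card_2_iff)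
  obtain b where b: "p = {a,b}" "a \<noteq> b" using uv p(2) by (auto simp: insert_commute)
  have "b \<in> set L1" using b \<open>p \<subseteq> set L\<close> L by auto
  then obtain x where x: "x < length L1" "L1 ! x = b" by (auto simp: in_set_conv_nth)
  define R where "R = tl (L1[x := hd L1])"
  have R: "set R = set L1 - {b}" "distinct R" "length R = 2*k"
    using rest_props[OF aL1(2) x(1)] aL1(3) x by (auto simp: R_def)
  have "insert a (insert b (set R)) = set L" using R(1) L \<open>b \<in> set L1\<close> by auto
  hence "matching (insert a (insert b (set R))) \<rho>" using Suc.prems(3) by simp
  hence "matching (set R) (\<rho> - {{a,b}})"
    using matching_remove[of a b "set R" \<rho>] R(1) aL1(1) b p(1) by auto
  then obtain xs where xs: "xs \<in> Dset k" "decode R xs = \<rho> - {{a,b}}"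
    using Suc.IH[OF R(2,3)] by blast
  have "decode L (x # xs) = insert {a, b} (\<rho> - {{a,b}})" using L x xs(2) by (simp add: R_def)
  also have "\<dots> = \<rho>" using p b by auto
  finally show ?case using xs(1) x(1) aL1(3) by (intro bexI[of _ "x # xs"]) auto
qed

lemma decode_bij:
  "distinct L \<Longrightarrow> length L = 2*k \<Longrightarrow> bij_betw (decode L) (Dset k) {\<rho>. matching (set L) \<rho>}"
  unfolding bij_betw_def using decode_inj decode_matching decode_surj by fastforce



lemma decode_map:
  "length L = 2*k \<Longrightarrow> xs \<in> Dset k \<Longrightarrow> decode (map g L) xs = (\<lambda>p. g ` p) ` decode L xs"
proof (induction k arbitrary: L xs)
  case 0
  thus ?case by simp
next
  case (Suc k)
  obtain a L1 where L: "L = a # L1" using Suc.prems by (cases L) auto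
  obtain x xs' where xs: "xs = x # xs'" "x < 2*k+1" "xs' \<in> Dset k" using Suc.prems(2) Dset_Suc_iff by blast
  have l1: "length L1 = 2*k+1" using Suc.prems L by simp
  have ne: "L1 \<noteq> []" using l1 by auto
  have "decode (map g L) xs = insert {g a, map g L1 ! x} (decode (tl ((map g L1)[x := hd (map g L1)])) xs')"
    using L xs by simp
  also have "tl ((map g L1)[x := hd (map g L1)]) = map g (tl (L1[x := hd L1]))"
    using ne by (simp add: map_update hd_map map_tl)
  also have "map g L1 ! x = g (L1 ! x)" using xs(2) l1 by simp
  also have "decode (map g (tl (L1[x := hd L1]))) xs' = (\<lambda>p. g ` p) ` decode (tl (L1[x := hd L1])) xs'"
    using Suc.IH[OF _ xs(3)] l1 by simp
  finally show ?case using L xs by simp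
qed

fun nbr :: "nat list \<Rightarrow> nat list \<Rightarrow> bool" where
  "nbr (x # xs) (y # ys) = ((x = y \<and> nbr xs ys) \<or> xs = ys)"
| "nbr [] [] = True"
| "nbr _ _ = False"

lemma nbr_sym: "nbr xs ys \<Longrightarrow> nbr ys xs"
  by (induction xs ys rule: nbr.induct) auto

lemma nbr_refl: "nbr xs xs"
  by (induction xs) auto

lemma tau_lemma:
  assumes "distinct L1" "x < length L1" "y < length L1" "x \<noteq> y"
  shows "tl (L1[y := hd L1]) = map (\<lambda>u. if u = hd L1 then L1 ! x else if u = L1 ! y then hd L1 else u) (tl (L1[x := hd L1]))"
proof (rule nth_equalityI)
  show "length (tl (L1[y := hd L1])) = length (map (\<lambda>u. if u = hd L1 then L1 ! x else if u = L1 ! y then hd L1 else u) (tl (L1[x := hd L1])))"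
    by simp
  fix i assume i: "i < length (tl (L1[y := hd L1]))"
  hence i1: "Suc i < length L1" by simp
  have ne: "L1 \<noteq> []" using assms by auto
  have hd: "hd L1 = L1 ! 0" using ne by (simp add: hd_conv_nth)
  have inj: "\<And>j j'. j < length L1 \<Longrightarrow> j' < length L1 \<Longrightarrow> (L1 ! j = L1 ! j') = (j = j')"
    using assms(1) by (simp add: nth_eq_iff_index_eq)
  show "tl (L1[y := hd L1]) ! i = map (\<lambda>u. if u = hd L1 then L1 ! x else if u = L1 ! y then hd L1 else u) (tl (L1[x := hd L1])) ! i"
    using i1 assms ne unfolding hd
    by (auto simp: nth_tl nth_list_update nth_eq_iff_index_eq)
qed

lemma matching_card_le1:
  assumes "matching S \<rho>" "finite \<rho>"
  shows "card {p \<in> \<rho>. u \<in> p} \<le> 1"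
proof (cases "u \<in> S")
  case True
  have "\<forall>p\<in>{p \<in> \<rho>. u \<in> p}. \<forall>q\<in>{p \<in> \<rho>. u \<in> p}. p = q"
    using matchingD3[OF assms(1) True] by blast
  thus ?thesis using assms(2) by (simp add: card_le_Suc0_iff_eq)
next
  case False
  hence "{p \<in> \<rho>. u \<in> p} = {}" using matchingD1[OF assms(1)] by blast
  hence "card {p \<in> \<rho>. u \<in> p} = 0" by (simp only: card.empty)
  thus ?thesis by linarith
qed

lemma decode_diff:
  "distinct L \<Longrightarrow> length L = 2*k \<Longrightarrow> xs \<in> Dset k \<Longrightarrow> ys \<in> Dset k \<Longrightarrow> nbr xs ys \<Longrightarrow>
   card (decode L xs - decode L ys) \<le> 3"
proof (induction k arbitrary: L xs ys)
  case 0
  thus ?case by simp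
next
  case (Suc k)
  obtain a L1 x xs' where d: "L = a # L1" "xs = x # xs'"
      "x < length L1" "xs' \<in> Dset k" "length L1 = 2*k+1" "a \<notin> set L1" "distinct L1"
      "decode L xs = insert {a, L1 ! x} (decode (tl (L1[x := hd L1])) xs')"
    by (rule decode_Cons_split[OF Suc.prems(1,2,3)])
  obtain a' L1' y ys' where e: "L = a' # L1'" "ys = y # ys'"
      "y < length L1'" "ys' \<in> Dset k" "length L1' = 2*k+1" "a' \<notin> set L1'" "distinct L1'"
      "decode L ys = insert {a', L1' ! y} (decode (tl (L1'[y := hd L1'])) ys')"
    by (rule decode_Cons_split[OF Suc.prems(1,2,4)])
  have [simp]: "a' = a" "L1' = L1" using d(1) e(1) by auto
  define R1 where "R1 = tl (L1[x := hd L1])"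
  define R2 where "R2 = tl (L1[y := hd L1])"
  have R1: "set R1 = set L1 - {L1 ! x}" "distinct R1" "length R1 = 2*k"
    using rest_props[OF d(7) d(3)] d(5) d(3) by (auto simp: R1_def)
  have R2: "length R2 = 2*k"
    using e(3) d(5) by (auto simp: R2_def)
  have nb: "(x = y \<and> nbr xs' ys') \<or> xs' = ys'" using Suc.prems(5) d(2) e(2) by simp
  have fin: "finite (decode L xs)" by (rule finite_decode)
  show ?case
  proof (cases "x = y \<and> nbr xs' ys'")
    case True
    hence "decode L xs - decode L ys \<subseteq> decode R1 xs' - decode R1 ys'"
      using d(8) e(8) by (auto simp: R1_def)
    hence "card (decode L xs - decode L ys) \<le> card (decode R1 xs' - decode R1 ys')"
      by (intro card_mono) (auto simp: finite_decode)
    also have "\<dots> \<le> 3" using Suc.IH[OF R1(2,3) d(4)] True e(4) by simp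
    finally show ?thesis .
  next
    case False
    hence s: "ys' = xs'" using nb by blast
    show ?thesis
    proof (cases "x = y")
      case True
      hence "decode L xs = decode L ys" using d(8) e(8) s by simp
      thus ?thesis by simp
    next
      case xy: False
      define \<tau> where "\<tau> = (\<lambda>u. if u = hd L1 then L1 ! x else if u = L1 ! y then hd L1 else u)"
      have "R2 = map \<tau> R1" unfolding R1_def R2_def \<tau>_def
        using tau_lemma[OF d(7) d(3) _ xy] e(3) by simp
      hence D2: "decode R2 xs' = (\<lambda>p. \<tau> ` p) ` decode R1 xs'"
        using decode_map[OF R1(3) d(4)] by simp
      have m1: "matching (set R1) (decode R1 xs')" using decode_matching[OF R1(2,3) d(4)] .
      have "decode L xs - decode L ys \<subseteq>
          insert {a, L1 ! x} ({p \<in> decode R1 xs'. hd L1 \<in> p} \<union> {p \<in> decode R1 xs'. L1 ! y \<in> p})"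
      proof
        fix p assume p: "p \<in> decode L xs - decode L ys"
        show "p \<in> insert {a, L1 ! x} ({p \<in> decode R1 xs'. hd L1 \<in> p} \<union> {p \<in> decode R1 xs'. L1 ! y \<in> p})"
        proof (cases "p = {a, L1 ! x}")
          case False
          hence p1: "p \<in> decode R1 xs'" using p d(8) by (auto simp: R1_def)
          have "p \<notin> decode R2 xs'" using p e(8) s by (auto simp: R2_def)
          hence "\<tau> ` p \<noteq> p" using p1 D2 by (metis image_eqI)
          then obtain u where "u \<in> p" "\<tau> u \<noteq> u" by (metis (no_types, lifting) image_cong image_ident)
          hence "u = hd L1 \<or> u = L1 ! y" unfolding \<tau>_def by (auto split: if_splits)
          thus ?thesis using p1 \<open>u \<in> p\<close> by auto
        qed simp
      qed
      hence "card (decode L xs - decode L ys) \<le>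
          card (insert {a, L1 ! x} ({p \<in> decode R1 xs'. hd L1 \<in> p} \<union> {p \<in> decode R1 xs'. L1 ! y \<in> p}))"
        by (intro card_mono) (auto simp: finite_decode)
      also have "\<dots> \<le> Suc (card ({p \<in> decode R1 xs'. hd L1 \<in> p} \<union> {p \<in> decode R1 xs'. L1 ! y \<in> p}))"
        by (simp add: card_insert_if finite_decode)
      also have "card ({p \<in> decode R1 xs'. hd L1 \<in> p} \<union> {p \<in> decode R1 xs'. L1 ! y \<in> p}) \<le>
           card {p \<in> decode R1 xs'. hd L1 \<in> p} + card {p \<in> decode R1 xs'. L1 ! y \<in> p}"
        by (rule card_Un_le)
      also have "card {p \<in> decode R1 xs'. hd L1 \<in> p} \<le> 1"
        by (rule matching_card_le1[OF m1 finite_decode])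
      also have "card {p \<in> decode R1 xs'. L1 ! y \<in> p} \<le> 1"
        by (rule matching_card_le1[OF m1 finite_decode])
      finally show ?thesis by simp
    qed
  qed
qed



lemma cosh_bound: "(exp (s::real) + exp (- s)) / 2 \<le> exp (s\<^sup>2 / 2)"
proof -
  define h where "h = 2 * \<bar>s\<bar>"
  have h0: "h \<ge> 0" by (simp add: h_def)
  have "- h * (1/2) + ln (1 + (1/2) * (exp h - 1)) \<le> h\<^sup>2 / 8"
    using Hoeffdings_lemma_aux[OF h0, of "1/2"] by simp
  hence "ln ((1 + exp h) / 2) \<le> h / 2 + h\<^sup>2 / 8" by (simp add: field_simps)
  hence "(1 + exp h) / 2 \<le> exp (h / 2 + h\<^sup>2 / 8)"
    by (metis add_pos_pos exp_gt_zero exp_le_cancel_iff exp_ln half_gt_zero zero_less_one)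
  hence "exp (- h / 2) * ((1 + exp h) / 2) \<le> exp (- h / 2) * exp (h / 2 + h\<^sup>2 / 8)"
    by (intro mult_left_mono) auto
  also have "exp (- h / 2) * exp (h / 2 + h\<^sup>2 / 8) = exp (h\<^sup>2 / 8)"
    by (simp add: exp_add[symmetric])
  also have "exp (- h / 2) * ((1 + exp h) / 2) = (exp (h/2) + exp (- (h/2))) / 2"
    by (simp add: field_simps exp_add[symmetric])
  also have "(exp (h/2) + exp (- (h/2))) / 2 = (exp s + exp (- s)) / 2"
    by (cases "s \<ge> 0") (auto simp: h_def)
  also have "h\<^sup>2 / 8 = s\<^sup>2 / 2" by (simp add: h_def power2_eq_square)
  finally show ?thesis .
qed

lemma avg_exp:
  fixes z :: "'a \<Rightarrow> real"
  assumes X: "finite X" and z0: "(\<Sum>x\<in>X. z x) = 0" and zc: "\<forall>x\<in>X. \<bar>z x\<bar> \<le> c"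
  shows "(\<Sum>x\<in>X. exp (l * z x)) \<le> card X * exp (l\<^sup>2 * c\<^sup>2 / 2)"
proof (cases "c > 0")
  case False
  hence "\<forall>x\<in>X. z x = 0" using zc by force
  hence "(\<Sum>x\<in>X. exp (l * z x)) = card X" by simp
  also have "\<dots> \<le> card X * exp (l\<^sup>2 * c\<^sup>2 / 2)"
  proof -
    have "1 \<le> exp (l\<^sup>2 * c\<^sup>2 / 2)" by simp
    thus ?thesis by (metis mult.right_neutral mult_left_mono of_nat_0_le_iff)
  qed
  finally show ?thesis .
next
  case True
  have pt: "exp (l * z x) \<le> (c - z x) / (2*c) * exp (- (l*c)) + (c + z x) / (2*c) * exp (l*c)"
    if x: "x \<in> X" for x
  proof -
    define t where "t = (c + z x) / (2*c)"
    have t: "t \<ge> 0" "t \<le> 1" using zc x True by (auto simp: t_def field_simps abs_le_iff)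
    have "exp ((1 - t) *\<^sub>R (- (l*c)) + t *\<^sub>R (l*c)) \<le> (1 - t) * exp (- (l*c)) + t * exp (l*c)"
      by (rule convex_onD[OF exp_convex t]) auto
    moreover have "(1 - t) *\<^sub>R (- (l*c)) + t *\<^sub>R (l*c) = l * z x"
      using True by (simp add: t_def field_simps)
    moreover have "1 - t = (c - z x) / (2*c)" using True by (simp add: t_def field_simps)
    ultimately show ?thesis by (simp add: t_def)
  qed
  have "(\<Sum>x\<in>X. exp (l * z x)) \<le> (\<Sum>x\<in>X. (c - z x) / (2*c) * exp (- (l*c)) + (c + z x) / (2*c) * exp (l*c))"
    by (rule sum_mono) (rule pt)
  also have "\<dots> = (\<Sum>x\<in>X. (exp (l*c) + exp (- (l*c))) / 2 + z x * ((exp (l*c) - exp (- (l*c))) / (2*c)))"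
    using True by (intro sum.cong) (auto simp: field_simps)
  also have "\<dots> = card X * ((exp (l*c) + exp (- (l*c))) / 2) + (\<Sum>x\<in>X. z x) * ((exp (l*c) - exp (- (l*c))) / (2*c))"
    by (simp add: sum.distrib sum_distrib_right sum_divide_distrib)
  also have "\<dots> = card X * ((exp (l*c) + exp (- (l*c))) / 2)" using z0 by simp
  also have "\<dots> \<le> card X * exp ((l*c)\<^sup>2 / 2)"
    by (intro mult_left_mono cosh_bound) auto
  finally show ?thesis by (simp add: power_mult_distrib)
qed

definition avg :: "(nat list \<Rightarrow> real) \<Rightarrow> nat \<Rightarrow> real" where
  "avg f k = (\<Sum>xs\<in>Dset k. f xs) / card (Dset k)"

definition BD :: "(nat list \<Rightarrow> real) \<Rightarrow> nat \<Rightarrow> real \<Rightarrow> bool" where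
  "BD f k c \<longleftrightarrow> (\<forall>xs\<in>Dset k. \<forall>ys\<in>Dset k. nbr xs ys \<longrightarrow> \<bar>f xs - f ys\<bar> \<le> c)"

lemma sum_Dset_Suc: "(\<Sum>ys\<in>Dset (Suc k). F ys) = (\<Sum>x<2*k+1. \<Sum>xs\<in>Dset k. F (x # xs))"
proof -
  have "inj_on (\<lambda>(x, xs). x # xs) ({..<2*k+1} \<times> Dset k)" by (auto simp: inj_on_def)
  hence "(\<Sum>ys\<in>Dset (Suc k). F ys) = (\<Sum>(x,xs)\<in>{..<2*k+1} \<times> Dset k. F (x # xs))"
    by (simp add: sum.reindex case_prod_unfold)
  also have "\<dots> = (\<Sum>x<2*k+1. \<Sum>xs\<in>Dset k. F (x # xs))"
    by (simp add: sum.cartesian_product)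
  finally show ?thesis .
qed

lemma card_Dset_pos: "card (Dset k) > 0"
  using finite_Dset Dset_nonempty by (simp add: card_gt_0_iff)

lemma mgf_bound:
  "BD f k c \<Longrightarrow> (\<Sum>xs\<in>Dset k. exp (l * (f xs - avg f k))) \<le> card (Dset k) * exp (k * l\<^sup>2 * c\<^sup>2 / 2)"
proof (induction k arbitrary: f)
  case 0
  thus ?case by (simp add: avg_def)
next
  case (Suc k)
  define N where "N = real (card (Dset k))"
  have N: "N > 0" using card_Dset_pos by (simp add: N_def)
  define \<mu>x where "\<mu>x = (\<lambda>x. avg (\<lambda>xs. f (x # xs)) k)"
  define \<mu> where "\<mu> = avg f (Suc k)"
  define E where "E = exp (k * l\<^sup>2 * c\<^sup>2 / 2)"
  have cardS: "real (card (Dset (Suc k))) = (2*k+1) * N"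
    unfolding N_def card_Dset_Suc by (simp add: algebra_simps)
  have mu: "\<mu> = (\<Sum>x<2*k+1. \<mu>x x) / (2*k+1)"
  proof -
    have "\<mu> = (\<Sum>x<2*k+1. \<Sum>xs\<in>Dset k. f (x # xs)) / ((2*k+1) * N)"
      unfolding \<mu>_def avg_def sum_Dset_Suc cardS by simp
    also have "\<dots> = (\<Sum>x<2*k+1. (\<Sum>xs\<in>Dset k. f (x # xs)) / N) / (2*k+1)"
      by (simp add: sum_divide_distrib[symmetric] field_simps)
    finally show ?thesis by (simp add: \<mu>x_def avg_def N_def)
  qed
  have BDg: "BD (\<lambda>xs. f (x # xs)) k c" if "x < 2*k+1" for x
    using Suc.prems that unfolding BD_def by (auto simp: Dset_Suc_iff)
  have muxy: "\<bar>\<mu>x x - \<mu>x y\<bar> \<le> c" if "x < 2*k+1" "y < 2*k+1" for x y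
  proof -
    have "\<mu>x x - \<mu>x y = (\<Sum>xs\<in>Dset k. f (x # xs) - f (y # xs)) / N"
      by (simp add: \<mu>x_def avg_def N_def sum_subtractf diff_divide_distrib)
    also have "\<bar>\<dots>\<bar> \<le> (N * c) / N"
    proof -
      have "\<bar>\<Sum>xs\<in>Dset k. f (x # xs) - f (y # xs)\<bar> \<le> (\<Sum>xs\<in>Dset k. \<bar>f (x # xs) - f (y # xs)\<bar>)"
        by (rule sum_abs)
      also have "\<dots> \<le> (\<Sum>xs\<in>Dset k. c)"
      proof (rule sum_mono)
        fix xs assume "xs \<in> Dset k"
        thus "\<bar>f (x # xs) - f (y # xs)\<bar> \<le> c"
          using Suc.prems that nbr_refl[of xs] unfolding BD_def by (auto simp: Dset_Suc_iff)
      qed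
      finally have "\<bar>\<Sum>xs\<in>Dset k. f (x # xs) - f (y # xs)\<bar> \<le> N * c" by (simp add: N_def)
      thus ?thesis using N by (simp add: abs_divide pos_divide_le_eq mult.commute)
    qed
    finally show ?thesis using N by simp
  qed
  have mux: "\<bar>\<mu>x x - \<mu>\<bar> \<le> c" if x: "x < 2*k+1" for x
  proof -
    have "\<mu>x x - \<mu> = (\<Sum>y<2*k+1. \<mu>x x - \<mu>x y) / (2*k+1)"
      unfolding mu by (simp add: sum_subtractf field_simps)
    also have "\<bar>\<dots>\<bar> \<le> ((2*k+1) * c) / (2*k+1)"
    proof -
      have "\<bar>\<Sum>y<2*k+1. \<mu>x x - \<mu>x y\<bar> \<le> (\<Sum>y<2*k+1. \<bar>\<mu>x x - \<mu>x y\<bar>)" by (rule sum_abs)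
      also have "\<dots> \<le> (\<Sum>y<2*k+1. c)" by (rule sum_mono) (use muxy x in auto)
      finally have h: "\<bar>\<Sum>y<2*k+1. \<mu>x x - \<mu>x y\<bar> \<le> (2*k+1) * c" by simp
      have "\<bar>(\<Sum>y<2*k+1. \<mu>x x - \<mu>x y) / (2*k+1)\<bar> = \<bar>\<Sum>y<2*k+1. \<mu>x x - \<mu>x y\<bar> / (2*k+1)"
        by (simp add: abs_divide)
      also have "\<dots> \<le> ((2*k+1) * c) / (2*k+1)"
        by (rule divide_right_mono[OF h]) simp
      finally show ?thesis .
    qed
    finally show ?thesis by simp
  qed
  have z0: "(\<Sum>x<2*k+1. \<mu>x x - \<mu>) = 0"
    unfolding mu by (simp add: sum_subtractf)
  have inner: "(\<Sum>xs\<in>Dset k. exp (l * (f (x # xs) - \<mu>x x))) \<le> N * E" if "x < 2*k+1" for x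
    using Suc.IH[OF BDg[OF that]] by (simp add: \<mu>x_def N_def E_def)
  have "(\<Sum>ys\<in>Dset (Suc k). exp (l * (f ys - \<mu>))) =
      (\<Sum>x<2*k+1. exp (l * (\<mu>x x - \<mu>)) * (\<Sum>xs\<in>Dset k. exp (l * (f (x # xs) - \<mu>x x))))"
    unfolding sum_Dset_Suc by (simp add: sum_distrib_left exp_add[symmetric] algebra_simps)
  also have "\<dots> \<le> (\<Sum>x<2*k+1. exp (l * (\<mu>x x - \<mu>)) * (N * E))"
    by (rule sum_mono) (use inner in \<open>auto intro: mult_left_mono\<close>)
  also have "\<dots> = (\<Sum>x<2*k+1. exp (l * (\<mu>x x - \<mu>))) * (N * E)"
    by (rule sum_distrib_right[symmetric])
  also have "\<dots> \<le> (card {..<2*k+1} * exp (l\<^sup>2 * c\<^sup>2 / 2)) * (N * E)"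
    using N by (intro mult_right_mono avg_exp[OF _ z0]) (use mux in \<open>auto simp: E_def\<close>)
  also have "\<dots> = card (Dset (Suc k)) * exp (real (Suc k) * l\<^sup>2 * c\<^sup>2 / 2)"
    using cardS by (simp add: E_def exp_add[symmetric] field_simps)
  finally show ?case by (simp add: \<mu>_def)
qed

lemma tail_bound:
  assumes bd: "BD f k c" and c: "c > 0" and k: "k > 0" and t: "t > 0"
  shows "card {xs \<in> Dset k. f xs - avg f k > t} \<le> card (Dset k) * exp (- t\<^sup>2 / (2 * real k * c\<^sup>2))"
proof -
  define l where "l = t / (k * c\<^sup>2)"
  have l: "l > 0" using c k t by (simp add: l_def)
  define S where "S = {xs \<in> Dset k. f xs - avg f k > t}"
  have "real (card S) = (\<Sum>xs\<in>S. 1)" by simp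
  also have "\<dots> \<le> (\<Sum>xs\<in>S. exp (l * (f xs - avg f k - t)))"
  proof (rule sum_mono)
    fix xs assume "xs \<in> S"
    hence "l * (f xs - avg f k - t) \<ge> 0" using l by (simp add: S_def)
    thus "1 \<le> exp (l * (f xs - avg f k - t))" by simp
  qed
  also have "\<dots> \<le> (\<Sum>xs\<in>Dset k. exp (l * (f xs - avg f k - t)))"
    by (rule sum_mono2) (auto simp: S_def finite_Dset)
  also have "\<dots> = exp (- (l * t)) * (\<Sum>xs\<in>Dset k. exp (l * (f xs - avg f k)))"
    by (simp add: sum_distrib_left exp_add[symmetric] algebra_simps)
  also have "\<dots> \<le> exp (- (l * t)) * (card (Dset k) * exp (k * l\<^sup>2 * c\<^sup>2 / 2))"
    by (intro mult_left_mono mgf_bound[OF bd]) auto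
  also have "\<dots> = card (Dset k) * exp (k * l\<^sup>2 * c\<^sup>2 / 2 - l * t)"
  proof -
    have "exp (k * l\<^sup>2 * c\<^sup>2 / 2 - l * t) = exp (- (l * t)) * exp (k * l\<^sup>2 * c\<^sup>2 / 2)"
      by (simp add: exp_add[symmetric])
    thus ?thesis by simp
  qed
  also have "k * l\<^sup>2 * c\<^sup>2 / 2 - l * t = - t\<^sup>2 / (2 * real k * c\<^sup>2)"
    using c k by (simp add: l_def field_simps power2_eq_square)
  finally show ?thesis by (simp add: S_def)
qed

lemma two_sided_bound:
  assumes bd: "BD f k c" and c: "c > 0" and k: "k > 0" and t: "t > 0"
  shows "card {xs \<in> Dset k. \<bar>f xs - avg f k\<bar> > t} \<le> 2 * card (Dset k) * exp (- t\<^sup>2 / (2 * real k * c\<^sup>2))"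
proof -
  have bd': "BD (\<lambda>xs. - f xs) k c" unfolding BD_def
  proof (intro ballI impI)
    fix xs ys assume "xs \<in> Dset k" "ys \<in> Dset k" "nbr xs ys"
    hence "\<bar>f xs - f ys\<bar> \<le> c" using bd unfolding BD_def by blast
    thus "\<bar>- f xs - - f ys\<bar> \<le> c" by linarith
  qed
  have av: "avg (\<lambda>xs. - f xs) k = - avg f k" by (simp add: avg_def sum_negf)
  define A where "A = {xs \<in> Dset k. \<bar>f xs - avg f k\<bar> > t}"
  define B where "B = {xs \<in> Dset k. f xs - avg f k > t}"
  define C where "C = {xs \<in> Dset k. (- f xs) - avg (\<lambda>xs. - f xs) k > t}"
  have "A \<subseteq> B \<union> C"
    using av by (auto simp: A_def B_def C_def)
  hence "card A \<le> card (B \<union> C)"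
    by (intro card_mono) (auto simp: B_def C_def finite_Dset)
  also have "\<dots> \<le> card B + card C"
    by (rule card_Un_le)
  finally have h: "card A \<le> card B + card C" .
  have "real (card A) \<le> real (card B) + real (card C)"
    unfolding of_nat_add[symmetric] of_nat_le_iff by (rule h)
  also have "\<dots> \<le> card (Dset k) * exp (- t\<^sup>2 / (2 * real k * c\<^sup>2)) + card (Dset k) * exp (- t\<^sup>2 / (2 * real k * c\<^sup>2))"
    unfolding B_def C_def by (intro add_mono tail_bound[OF bd c k t] tail_bound[OF bd' c k t])
  finally show ?thesis by (simp add: A_def)
qed



lemma simple_graph_alt: "finite \<rho> \<Longrightarrow> simple_graph \<rho> = {e \<in> (\<lambda>p. fst ` p) ` \<rho>. card e = 2}"
  unfolding simple_graph_def proj_multigraph_def by simp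

lemma simple_graph_finite: "finite \<rho> \<Longrightarrow> finite (simple_graph \<rho>)"
  by (simp add: simple_graph_alt)

lemma simple_graph_diff:
  assumes "finite M" "finite M'"
  shows "card (simple_graph M - simple_graph M') \<le> card (M - M')"
proof -
  have "simple_graph M - simple_graph M' \<subseteq> (\<lambda>p. fst ` p) ` (M - M')"
    using assms by (auto simp: simple_graph_alt)
  hence "card (simple_graph M - simple_graph M') \<le> card ((\<lambda>p. fst ` p) ` (M - M'))"
    using assms by (intro card_mono) auto
  also have "\<dots> \<le> card (M - M')" by (rule card_image_le) (use assms in auto)
  finally show ?thesis .
qed

theorem lemma13:
  fixes i :: theta_index and r n :: nat and t :: real
  assumes "r > 0" and "n > 0" and "even (r * n)" and "t > 0"
  defines "C \<equiv> configurations n r"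
      and "m \<equiv> r * n div 2"
      and "\<mu> \<equiv> (\<Sum>\<rho>\<in>configurations n r. theta i n (simple_graph \<rho>)) / real (card (configurations n r))"
  shows "real (card {\<rho> \<in> C. \<bar>theta i n (simple_graph \<rho>) - \<mu>\<bar> > t}) / real (card C)
           \<le> 2 * exp (- (t ^ 2) / (128 * real m))"
proof -
  have finW: "finite (Wset n r)" by (simp add: Wset_def Vset_def)
  obtain L0 where L0: "set L0 = Wset n r" "distinct L0"
    using finite_distinct_list[OF finW] by blast
  have "length L0 = card (Wset n r)" using L0 distinct_card by metis
  also have "\<dots> = n * r" by (simp add: Wset_def Vset_def card_cartesian_product)
  also have "n * r = 2 * m" using assms(3) by (simp add: m_def mult.commute)
  finally have lenL0: "length L0 = 2 * m" .
  have m0: "m > 0" using assms(1,2,3) by (auto simp: m_def elim!: evenE)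
  have Ceq: "C = {\<rho>. matching (set L0) \<rho>}"
    unfolding C_def configurations_def matching_def L0(1) ..
  have bij: "bij_betw (decode L0) (Dset m) C"
    using decode_bij[OF L0(2) lenL0] Ceq by simp
  define f where "f = (\<lambda>xs. theta i n (simple_graph (decode L0 xs)))"
  have BDf: "BD f m 6" unfolding BD_def
  proof (intro ballI impI)
    fix xs ys assume xs: "xs \<in> Dset m" and ys: "ys \<in> Dset m" and nb: "nbr xs ys"
    define M where "M = decode L0 xs"
    define M' where "M' = decode L0 ys"
    have fM: "finite M" "finite M'" by (simp_all add: M_def M'_def finite_decode)
    have d1: "card (M - M') \<le> 3" unfolding M_def M'_def by (rule decode_diff[OF L0(2) lenL0 xs ys nb])
    have d2: "card (M' - M) \<le> 3" unfolding M_def M'_def by (rule decode_diff[OF L0(2) lenL0 ys xs nbr_sym[OF nb]])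
    have "\<bar>f xs - f ys\<bar> \<le> card (simple_graph M - simple_graph M') + card (simple_graph M' - simple_graph M)"
      unfolding f_def M_def[symmetric] M'_def[symmetric]
      by (rule theta_lip[OF assms(2) simple_graph_finite[OF fM(1)] simple_graph_finite[OF fM(2)]])
    also have "\<dots> \<le> real (card (M - M')) + real (card (M' - M))"
      using simple_graph_diff[OF fM(1,2)] simple_graph_diff[OF fM(2,1)] by simp
    also have "\<dots> \<le> 6" using d1 d2 by simp
    finally show "\<bar>f xs - f ys\<bar> \<le> 6" .
  qed
  have cardC: "card C = card (Dset m)" using bij_betw_same_card[OF bij] by simp
  have mu: "\<mu> = avg f m"
  proof -
    have "(\<Sum>\<rho>\<in>C. theta i n (simple_graph \<rho>)) = (\<Sum>xs\<in>Dset m. f xs)"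
      unfolding f_def using sum.reindex_bij_betw[OF bij, of "\<lambda>\<rho>. theta i n (simple_graph \<rho>)"] by simp
    thus ?thesis unfolding \<mu>_def avg_def C_def[symmetric] cardC by simp
  qed
  define A where "A = {xs \<in> Dset m. \<bar>f xs - \<mu>\<bar> > t}"
  have img: "{\<rho> \<in> C. \<bar>theta i n (simple_graph \<rho>) - \<mu>\<bar> > t} = decode L0 ` A"
  proof -
    have im: "decode L0 ` Dset m = C" using bij by (simp add: bij_betw_def)
    show ?thesis
    proof
      show "{\<rho> \<in> C. \<bar>theta i n (simple_graph \<rho>) - \<mu>\<bar> > t} \<subseteq> decode L0 ` A"
      proof
        fix \<rho> assume "\<rho> \<in> {\<rho> \<in> C. \<bar>theta i n (simple_graph \<rho>) - \<mu>\<bar> > t}"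
        then obtain xs where "xs \<in> Dset m" "\<rho> = decode L0 xs" "\<bar>theta i n (simple_graph \<rho>) - \<mu>\<bar> > t"
          using im by blast
        thus "\<rho> \<in> decode L0 ` A" unfolding A_def f_def by (intro image_eqI[of _ _ xs]) auto
      qed
      show "decode L0 ` A \<subseteq> {\<rho> \<in> C. \<bar>theta i n (simple_graph \<rho>) - \<mu>\<bar> > t}"
        using im unfolding A_def f_def by auto
    qed
  qed
  have "card (decode L0 ` A) = card A"
    by (rule card_image) (rule inj_on_subset[OF bij_betw_imp_inj_on[OF bij]], auto simp: A_def)
  hence cA: "card {\<rho> \<in> C. \<bar>theta i n (simple_graph \<rho>) - \<mu>\<bar> > t} = card A" using img by simp
  have "real (card A) \<le> 2 * card (Dset m) * exp (- t\<^sup>2 / (2 * real m * 6\<^sup>2))"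
    unfolding A_def mu by (rule two_sided_bound[OF BDf _ m0 assms(4)]) simp
  hence "real (card A) / real (card (Dset m)) \<le> 2 * exp (- t\<^sup>2 / (2 * real m * 6\<^sup>2))"
    using card_Dset_pos[of m] by (simp add: pos_divide_le_eq mult.commute mult.left_commute)
  also have "\<dots> \<le> 2 * exp (- (t ^ 2) / (128 * real m))"
  proof -
    have "t\<^sup>2 / (128 * real m) \<le> t\<^sup>2 / (2 * real m * 6\<^sup>2)"
      using m0 by (intro divide_left_mono) (auto simp: power2_eq_square)
    thus ?thesis by simp
  qed
  finally show ?thesis using cA cardC by simp
qed

end
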